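(* Let $\alpha,\beta\in\mathbb{C}$ be not both zero, let $\ell(x,y)=\alpha x+\beta y$, and let $$H(x,y)=\tfrac12 a_1x^2+a_2xy+\tfrac12 a_3y^2+a_4x+a_5y$$ with coefficients $a_1,\dots,a_5$. Consider the Hamiltonian vector field $$f(x,y)=\ell(x,y)\begin{pmatrix}\partial H/\partial y\\ -\partial H/\partial x\end{pmatrix},$$ and its Kahan map $\Phi_f$ (with step $\varepsilon=1$). Set $\gamma_1=a_2^2-a_1a_3$, $\gamma_2=a_3a_4^2+a_1a_5^2-2a_2a_4a_5$, $C(x,y)=H(x,y)-\tfrac12\gamma_2\ell^2(x,y)$, $D(x,y)=1-\gamma_1\ell^2(x,y)$, and let $\mathfrak E$ be the pencil of conics $\mathcal E_\lambda=\{(x,y): C(x,y)-\lambda D(x,y)=0\}$, where the conic $C(x,y)=0$ is assumed nonsingular. Then $$\Phi_f=I_{\mathfrak E,B_\infty}\circ I_{\mathfrak E,B_0},$$ where $B_\infty=[-\beta:\alpha:0]$ is the point at infinity of the line $\ell(x,y)=0$ and $$B_0=\rho(-\beta,\alpha),\qquad \rho=\frac{1+(\beta a_4-\alpha a_5)}{\beta^2a_1-2\alpha\beta a_2+\alpha^2a_3}$$ (both points lie on the line $\ell(x,y)=0$).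
   Context: Kahan discretization: for a quadratic vector field $f(x)=Q(x)+Bx+c$ on $\mathbb{C}^n$ (each component of $Q$ a quadratic form, $B$ a matrix, $c$ a vector), the Kahan map $\widetilde x=\Phi_f(x)$ (step $\varepsilon=1$) is defined by $\frac{\widetilde x-x}{2}=Q(x,\widetilde x)+\frac12B(x+\widetilde x)+c$, where $Q(x,\widetilde x)=\frac12(Q(x+\widetilde x)-Q(x)-Q(\widetilde x))$; explicitly $\Phi_f(x)=x+2(I-f'(x))^{-1}f(x)$ with $f'$ the Jacobi matrix. It is a birational map. Switches: for a nonsingular conic $\mathcal E$ and a point $B\notin\mathcal E$ (possibly a point at infinity of $\mathbb{C}P^2$), the $B$-switch $I_{\mathcal E,B}:\mathcal E\to\mathcal E$ sends $P\in\mathcal E$ to the second intersection point of $\mathcal E$ with the line $(BP)$. For a pencil $\mathfrak E=\{\mathcal E_\lambda\}$ of conics, the $B$-switch $I_{\mathfrak E,B}:\mathbb{C}^2\dashrightarrow\mathbb{C}^2$ is the birational map sending a non-base point $P$ to $I_{\mathcal E_\lambda,B}(P)$, where $\mathcal E_\lambda$ is the unique conic of the pencil through $P$. *)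

theory Defs
  imports "HOL-Analysis.Analysis"
begin

type_synonym point = "complex \<times> complex"

definition pt_add :: "point \<Rightarrow> point \<Rightarrow> point" where
  "pt_add P Q = (fst P + fst Q, snd P + snd Q)"

definition pt_scale :: "complex \<Rightarrow> point \<Rightarrow> point" where
  "pt_scale k P = (k * fst P, k * snd P)"

definition pt_sub :: "point \<Rightarrow> point \<Rightarrow> point" where
  "pt_sub P Q = pt_add P (pt_scale (-1) Q)"

text \<open>Kahan discretization (step 1) of a quadratic vector field f = Q + B + c on C^2.
  The parts are recovered from f:  c = f 0,  B u = (f u - f(-u))/2,
  Q u = (f u + f(-u))/2 - f 0  (valid for quadratic f).\<close>

definition vf_const :: "(point \<Rightarrow> point) \<Rightarrow> point" where
  "vf_const f = f (0, 0)"

definition vf_lin :: "(point \<Rightarrow> point) \<Rightarrow> point \<Rightarrow> point" where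
  "vf_lin f u = pt_scale (1/2) (pt_sub (f u) (f (pt_scale (-1) u)))"

definition vf_quad :: "(point \<Rightarrow> point) \<Rightarrow> point \<Rightarrow> point" where
  "vf_quad f u = pt_sub (pt_scale (1/2) (pt_add (f u) (f (pt_scale (-1) u)))) (vf_const f)"

definition vf_polar :: "(point \<Rightarrow> point) \<Rightarrow> point \<Rightarrow> point \<Rightarrow> point" where
  "vf_polar f x y =
     pt_scale (1/2) (pt_sub (pt_sub (vf_quad f (pt_add x y)) (vf_quad f x)) (vf_quad f y))"

definition kahan_eq :: "(point \<Rightarrow> point) \<Rightarrow> point \<Rightarrow> point \<Rightarrow> bool" where
  "kahan_eq f x xt \<longleftrightarrow>
     pt_scale (1/2) (pt_sub xt x) =
     pt_add (pt_add (vf_polar f x xt) (pt_scale (1/2) (vf_lin f (pt_add x xt)))) (vf_const f)"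

definition kahan_defined :: "(point \<Rightarrow> point) \<Rightarrow> point \<Rightarrow> bool" where
  "kahan_defined f x \<longleftrightarrow> (\<exists>!xt. kahan_eq f x xt)"

definition kahan_map :: "(point \<Rightarrow> point) \<Rightarrow> point \<Rightarrow> point" where
  "kahan_map f x = (THE xt. kahan_eq f x xt)"

text \<open>Conics: q(x,y) = c11 x^2 + 2 c12 x y + c22 y^2 + 2 c13 x + 2 c23 y + c33;
  nonsingular iff the symmetric 3x3 matrix of its homogenization has nonzero determinant.\<close>

definition conic_nonsingular :: "(point \<Rightarrow> complex) \<Rightarrow> bool" where
  "conic_nonsingular q \<longleftrightarrow>
     (\<exists>c11 c12 c22 c13 c23 c33.
        (\<forall>x y. q (x, y) = c11*x^2 + 2*c12*x*y + c22*y^2 + 2*c13*x + 2*c23*y + c33) \<and>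
        c11*(c22*c33 - c23*c23) - c12*(c12*c33 - c23*c13) + c13*(c12*c23 - c22*c13) \<noteq> 0)"

text \<open>Pencil of conics C - \<lambda> D = 0 (including \<lambda> = \<infinity>, the conic D = 0).
  The member through a non-base point P is the zero set of  D(P) C - C(P) D.\<close>
definition pencil_member_through :: "(point \<Rightarrow> complex) \<Rightarrow> (point \<Rightarrow> complex) \<Rightarrow> point \<Rightarrow> point \<Rightarrow> complex" where
  "pencil_member_through C D P X = D P * C X - C P * D X"

text \<open>A point B of CP^2 in homogeneous coordinates (b1, b2, b3) (b3 = 0: point at infinity).
  The line (BP) through an affine point P is {P + t v}, v the direction below.\<close>
definition line_dir :: "complex \<times> complex \<times> complex \<Rightarrow> point \<Rightarrow> point" where
  "line_dir B P = (case B of (b1, b2, b3) \<Rightarrow> (b1 - b3 * fst P, b2 - b3 * snd P))"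

text \<open>Q is the second intersection point of the line (BP) with the conic of the pencil through P:
  restricted to the line, the conic equation is a genuine quadratic A t (t - t0) in the line
  parameter (root t = 0 is P), and Q is the point with parameter t0 (Q = P in the tangent case).\<close>
definition switch_rel :: "(point \<Rightarrow> complex) \<Rightarrow> (point \<Rightarrow> complex) \<Rightarrow> complex \<times> complex \<times> complex
    \<Rightarrow> point \<Rightarrow> point \<Rightarrow> bool" where
  "switch_rel C D B P Q \<longleftrightarrow>
     (\<exists>A t0. A \<noteq> 0 \<and>
        (\<forall>t. pencil_member_through C D P (pt_add P (pt_scale t (line_dir B P))) = A * t * (t - t0)) \<and>
        Q = pt_add P (pt_scale t0 (line_dir B P)))"

definition switch_defined :: "(point \<Rightarrow> complex) \<Rightarrow> (point \<Rightarrow> complex) \<Rightarrow> complex \<times> complex \<times> complex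
    \<Rightarrow> point \<Rightarrow> bool" where
  "switch_defined C D B P \<longleftrightarrow> (\<exists>Q. switch_rel C D B P Q)"

definition switch_map :: "(point \<Rightarrow> complex) \<Rightarrow> (point \<Rightarrow> complex) \<Rightarrow> complex \<times> complex \<times> complex
    \<Rightarrow> point \<Rightarrow> point" where
  "switch_map C D B P = (THE Q. switch_rel C D B P Q)"

end

theory Submission
  imports Defs "HOL-Computational_Algebra.Polynomial"
begin

locale kp =
  fixes al be a1 a2 a3 a4 a5 :: complex
begin

definition "kl x y = al*x + be*y"
definition "kH2 x y = a1*x^2 + 2*a2*x*y + a3*y^2 + 2*a4*x + 2*a5*y"
definition "kF1 x y = a2*x + a3*y + a5"
definition "kF2 x y = -(a1*x + a2*y + a4)"
definition "kg1 = a2^2 - a1*a3"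
definition "kg2 = a3*a4^2 + a1*a5^2 - 2*a2*a4*a5"
definition "kC2 x y = kH2 x y - kg2*(kl x y)^2"
definition "kD x y = 1 - kg1*(kl x y)^2"
definition "khh = be^2*a1 - 2*al*be*a2 + al^2*a3"
definition "knm = 1 + (be*a4 - al*a5)"
definition "kgw X Y = -be*(a1*X + a2*Y + a4) + al*(a2*X + a3*Y + a5)"
definition "kE1 x y X Y = X - x - kl x y * kF1 X Y - kl X Y * kF1 x y"
definition "kE2 x y X Y = Y - y - kl x y * kF2 X Y - kl X Y * kF2 x y"
definition "km11 x y = 1 - kl x y * a2 - al * kF1 x y"
definition "km12 x y = - kl x y * a3 - be * kF1 x y"
definition "km21 x y = kl x y * a1 - al * kF2 x y"
definition "km22 x y = 1 + kl x y * a2 - be * kF2 x y"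
definition "kdet x y = km11 x y * km22 x y - km12 x y * km21 x y"

definition "kG1 x y r = ((-1)*2*a5*y - 2*a4*x - 2*a3*y^2 - 4*a2*x*y - 2*a1*x^2 - 2*be*a4*r - 2*be*a2*y*r - 2*be*a1*x*r + 2*be^2*a3*a4^2*y^2 - 4*be^2*a2*a4*a5*y^2 - 2*be^2*a2^2*a5*y^3 - 2*be^2*a2^2*a4*x*y^2 + 2*be^2*a1*a5^2*y^2 + 2*be^2*a1*a3*a5*y^3 + 2*be^2*a1*a3*a4*x*y^2 + 2*be^3*a2^2*a4*y^2*r + 2*be^3*a2^3*y^3*r - 2*be^3*a1*a3*a4*y^2*r - 2*be^3*a1*a2*a3*y^3*r + 2*be^3*a1*a2^2*x*y^2*r - 2*be^3*a1^2*a3*x*y^2*r + 2*al*a5*r + 2*al*a3*y*r + 2*al*a2*x*r + 4*al*be*a3*a4^2*x*y - 8*al*be*a2*a4*a5*x*y - 4*al*be*a2^2*a5*x*y^2 - 4*al*be*a2^2*a4*x^2*y + 4*al*be*a1*a5^2*x*y + 4*al*be*a1*a3*a5*x*y^2 + 4*al*be*a1*a3*a4*x^2*y - 2*al*be^2*a2^2*a5*y^2*r + 4*al*be^2*a2^2*a4*x*y*r - 2*al*be^2*a2^2*a3*y^3*r + 2*al*be^2*a2^3*x*y^2*r + 2*al*be^2*a1*a3*a5*y^2*r - 4*al*be^2*a1*a3*a4*x*y*r + 2*al*be^2*a1*a3^2*y^3*r - 2*al*be^2*a1*a2*a3*x*y^2*r + 4*al*be^2*a1*a2^2*x^2*y*r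 - 4*al*be^2*a1^2*a3*x^2*y*r + 2*al^2*a3*a4^2*x^2 - 4*al^2*a2*a4*a5*x^2 - 2*al^2*a2^2*a5*x^2*y - 2*al^2*a2^2*a4*x^3 + 2*al^2*a1*a5^2*x^2 + 2*al^2*a1*a3*a5*x^2*y + 2*al^2*a1*a3*a4*x^3 - 4*al^2*be*a2^2*a5*x*y*r + 2*al^2*be*a2^2*a4*x^2*r - 4*al^2*be*a2^2*a3*x*y^2*r - 2*al^2*be*a2^3*x^2*y*r + 4*al^2*be*a1*a3*a5*x*y*r - 2*al^2*be*a1*a3*a4*x^2*r + 4*al^2*be*a1*a3^2*x*y^2*r + 2*al^2*be*a1*a2*a3*x^2*y*r + 2*al^2*be*a1*a2^2*x^3*r - 2*al^2*be*a1^2*a3*x^3*r - 2*al^3*a2^2*a5*x^2*r - 2*al^3*a2^2*a3*x^2*y*r - 2*al^3*a2^3*x^3*r + 2*al^3*a1*a3*a5*x^2*r + 2*al^3*a1*a3^2*x^2*y*r + 2*al^3*a1*a2*a3*x^3*r)"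

definition "kG2 x y r = (a3*y^2 + 2*a2*x*y + a1*x^2 + 2*be*a2*y*r + 2*be*a1*x*r - be^2*a3*a4^2*y^2 + 2*be^2*a2*a4*a5*y^2 + 2*be^2*a2^2*a5*y^3 + 2*be^2*a2^2*a4*x*y^2 + be^2*a1*r^2 - be^2*a1*a5^2*y^2 - 2*be^2*a1*a3*a5*y^3 - 2*be^2*a1*a3*a4*x*y^2 - 2*be^3*a2^3*y^3*r + 2*be^3*a1*a2*a3*y^3*r - 2*be^3*a1*a2^2*x*y^2*r + 2*be^3*a1^2*a3*x*y^2*r - be^4*a1*a2^2*y^2*r^2 + be^4*a1^2*a3*y^2*r^2 - 2*al*a3*y*r - 2*al*a2*x*r - 2*al*be*a3*a4^2*x*y - 2*al*be*a2*r^2 + 4*al*be*a2*a4*a5*x*y + 4*al*be*a2^2*a5*x*y^2 + 4*al*be*a2^2*a4*x^2*y - 2*al*be*a1*a5^2*x*y - 4*al*be*a1*a3*a5*x*y^2 - 4*al*be*a1*a3*a4*x^2*y + 2*al*be^2*a2^2*a3*y^3*r - 2*al*be^2*a2^3*x*y^2*r - 2*al*be^2*a1*a3^2*y^3*r + 2*al*be^2*a1*a2*a3*x*y^2*r - 4*al*be^2*a1*a2^2*x^2*y*r + 4*al*be^2*a1^2*a3*x^2*y*r + 2*al*be^3*a2^3*y^2*r^2 - 2*al*be^3*a1*a2*a3*y^2*r^2 - 2*al*be^3*a1*a2^2*x*y*r^2 + 2*al*be^3*a1^2*a3*x*y*r^2 + al^2*a3*r^2 - al^2*a3*a4^2*x^2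 + 2*al^2*a2*a4*a5*x^2 + 2*al^2*a2^2*a5*x^2*y + 2*al^2*a2^2*a4*x^3 - al^2*a1*a5^2*x^2 - 2*al^2*a1*a3*a5*x^2*y - 2*al^2*a1*a3*a4*x^3 + 4*al^2*be*a2^2*a3*x*y^2*r + 2*al^2*be*a2^3*x^2*y*r - 4*al^2*be*a1*a3^2*x*y^2*r - 2*al^2*be*a1*a2*a3*x^2*y*r - 2*al^2*be*a1*a2^2*x^3*r + 2*al^2*be*a1^2*a3*x^3*r - al^2*be^2*a2^2*a3*y^2*r^2 + 4*al^2*be^2*a2^3*x*y*r^2 + al^2*be^2*a1*a3^2*y^2*r^2 - 4*al^2*be^2*a1*a2*a3*x*y*r^2 - al^2*be^2*a1*a2^2*x^2*r^2 + al^2*be^2*a1^2*a3*x^2*r^2 + 2*al^3*a2^2*a3*x^2*y*r + 2*al^3*a2^3*x^3*r - 2*al^3*a1*a3^2*x^2*y*r - 2*al^3*a1*a2*a3*x^3*r - 2*al^3*be*a2^2*a3*x*y*r^2 + 2*al^3*be*a2^3*x^2*r^2 + 2*al^3*be*a1*a3^2*x*y*r^2 - 2*al^3*be*a1*a2*a3*x^2*r^2 - al^4*a2^2*a3*x^2*r^2 + al^4*a1*a3^2*x^2*r^2)"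

definition "kG1c x y r = (2*be*a4 + 4*be*a2*y + 4*be*a1*x + 2*be^2*a1*r + 2*be^3*a2^2*a4*y^2 - 2*be^3*a1*a3*a4*y^2 - 2*be^4*a1*a2^2*y^2*r + 2*be^4*a1^2*a3*y^2*r - 2*al*a5 - 4*al*a3*y - 4*al*a2*x - 4*al*be*a2*r - 2*al*be^2*a2^2*a5*y^2 + 4*al*be^2*a2^2*a4*x*y + 2*al*be^2*a1*a3*a5*y^2 - 4*al*be^2*a1*a3*a4*x*y + 4*al*be^3*a2^3*y^2*r - 4*al*be^3*a1*a2*a3*y^2*r - 4*al*be^3*a1*a2^2*x*y*r + 4*al*be^3*a1^2*a3*x*y*r + 2*al^2*a3*r - 4*al^2*be*a2^2*a5*x*y + 2*al^2*be*a2^2*a4*x^2 + 4*al^2*be*a1*a3*a5*x*y - 2*al^2*be*a1*a3*a4*x^2 - 2*al^2*be^2*a2^2*a3*y^2*r + 8*al^2*be^2*a2^3*x*y*r + 2*al^2*be^2*a1*a3^2*y^2*r - 8*al^2*be^2*a1*a2*a3*x*y*r - 2*al^2*be^2*a1*a2^2*x^2*r + 2*al^2*be^2*a1^2*a3*x^2*r - 2*al^3*a2^2*a5*x^2 + 2*al^3*a1*a3*a5*x^2 - 4*al^3*be*a2^2*a3*x*y*r + 4*al^3*be*a2^3*x^2*r + 4*al^3*be*a1*a3^2*x*y*r - 4*al^3*be*a1*a2*a3*x^2*r - 2*al^4*a2^2*a3*x^2*r + 2*al^4*a1*a3^2*x^2*r)"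

definition "kG2c x y r = ((-1)*2*be*a2*y - 2*be*a1*x - 2*be^2*a1*r - 2*be^3*a2^2*a4*y^2 + 2*be^3*a1*a3*a4*y^2 + 2*be^4*a1*a2^2*y^2*r - 2*be^4*a1^2*a3*y^2*r + 2*al*a3*y + 2*al*a2*x + 4*al*be*a2*r + 2*al*be^2*a2^2*a5*y^2 - 4*al*be^2*a2^2*a4*x*y - 2*al*be^2*a1*a3*a5*y^2 + 4*al*be^2*a1*a3*a4*x*y - 4*al*be^3*a2^3*y^2*r + 4*al*be^3*a1*a2*a3*y^2*r + 4*al*be^3*a1*a2^2*x*y*r - 4*al*be^3*a1^2*a3*x*y*r - 2*al^2*a3*r + 4*al^2*be*a2^2*a5*x*y - 2*al^2*be*a2^2*a4*x^2 - 4*al^2*be*a1*a3*a5*x*y + 2*al^2*be*a1*a3*a4*x^2 + 2*al^2*be^2*a2^2*a3*y^2*r - 8*al^2*be^2*a2^3*x*y*r - 2*al^2*be^2*a1*a3^2*y^2*r + 8*al^2*be^2*a1*a2*a3*x*y*r + 2*al^2*be^2*a1*a2^2*x^2*r - 2*al^2*be^2*a1^2*a3*x^2*r + 2*al^3*a2^2*a5*x^2 - 2*al^3*a1*a3*a5*x^2 + 4*al^3*be*a2^2*a3*x*y*r - 4*al^3*be*a2^3*x^2*r - 4*al^3*be*a1*a3^2*x*y*r + 4*al^3*be*a1*a2*a3*x^2*r + 2*al^4*a2^2*a3*x^2*r - 2*al^4*a1*a3^2*x^2*r)"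

definition "kEa1 x y r = (2*be^2*a2*y + be^2*a1*x - 2*be^3*a2^2*y^2 + be^3*a1*r + be^3*a1*a5*y + 2*be^3*a1*a3*y^2 - be^4*a1*a2*y*r - 2*al*be*a3*y - 2*al*be^2*a2*r - 2*al*be^2*a2*a5*y - 4*al*be^2*a2^2*x*y + al*be^2*a1*a5*x + 4*al*be^2*a1*a3*x*y + 2*al*be^3*a2^2*y*r + al*be^3*a1*a3*y*r - al*be^3*a1*a2*x*r - al^2*a3*x + al^2*be*a3*r + al^2*be*a3*a5*y - 2*al^2*be*a2*a5*x - 2*al^2*be*a2^2*x^2 + 2*al^2*be*a1*a3*x^2 - 3*al^2*be^2*a2*a3*y*r + 2*al^2*be^2*a2^2*x*r + al^2*be^2*a1*a3*x*r + al^3*a3*a5*x + al^3*be*a3^2*y*r - 3*al^3*be*a2*a3*x*r + al^4*a3^2*x*r)"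

definition "kEb1 x y r = ((-1)*2*be^2*a4 - 2*be^2*a2*y - 2*be^2*a1*x + 2*be^3*a2*a4*y + 2*be^3*a2^2*y^2 - 2*be^3*a1*a5*y - 2*be^3*a1*a3*y^2 + 2*al*be*a5 + 2*al*be*a3*y + 2*al*be*a2*x - 2*al*be^2*a3*a4*y + 2*al*be^2*a2*a5*y + 2*al*be^2*a2*a4*x + 4*al*be^2*a2^2*x*y - 2*al*be^2*a1*a5*x - 4*al*be^2*a1*a3*x*y - 2*al^2*be*a3*a4*x + 2*al^2*be*a2*a5*x + 2*al^2*be*a2^2*x^2 - 2*al^2*be*a1*a3*x^2)"

definition "kcof1 x y r = (2*be^2*a3*a4*y^2 - 4*be^2*a2*a5*y^2 - 2*be^2*a2*a3*y^3 - 4*be^2*a2^2*x*y^2 - 2*be^2*a1*a5*x*y - 2*be^2*a1*a2*x^2*y - 2*be^3*a3*a4^2*y^2 + 4*be^3*a2*a4*a5*y^2 + 4*be^3*a2^2*a5*y^3 + 4*be^3*a2^2*a4*x*y^2 + 2*be^3*a2^2*a3*y^4 + 4*be^3*a2^3*x*y^3 - 2*be^3*a1*a5*y*r - 2*be^3*a1*a5^2*y^2 - 2*be^3*a1*a3*y^2*r - 4*be^3*a1*a3*a5*y^3 - 4*be^3*a1*a3*a4*x*y^2 - 2*be^3*a1*a3^2*y^4 - 2*be^3*a1*a2*x*y*r - 4*be^3*a1*a2*a3*x*y^3 + 2*be^3*a1*a2^2*x^2*y^2 - 2*be^3*a1^2*a3*x^2*y^2 + 2*be^4*a2*a3*a4^2*y^3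 - 4*be^4*a2^2*a4*a5*y^3 - 2*be^4*a2^2*a3*a4*y^4 - 4*be^4*a2^3*a4*x*y^3 + 2*be^4*a1*a3^2*a4*y^4 + 2*be^4*a1*a2*a5^2*y^3 + 4*be^4*a1*a2*a3*a4*x*y^3 + 2*be^4*a1*a2^2*a5*x*y^3 - 2*be^4*a1^2*a3*a5*x*y^3 + 2*be^5*a1*a2^2*a5*y^3*r + 2*be^5*a1*a2^2*a3*y^4*r + 2*be^5*a1*a2^3*x*y^3*r - 2*be^5*a1^2*a3*a5*y^3*r - 2*be^5*a1^2*a3^2*y^4*r - 2*be^5*a1^2*a2*a3*x*y^3*r + 2*al*be*a3*a5*y^2 + 4*al*be*a3*a4*x*y + 2*al*be*a3^2*y^3 - 4*al*be*a2*a5*x*y + 2*al*be*a2*a3*x*y^2 - 4*al*be*a2^2*x^2*y - 2*al*be*a1*a5*x^2 + 2*al*be*a1*a3*x^2*y - 2*al*be*a1*a2*x^3 - 4*al*be^2*a3*a4^2*x*y + 4*al*be^2*a2*a5*y*r + 8*al*be^2*a2*a4*a5*x*y + 4*al*be^2*a2*a3*y^2*r + 4*al*be^2*a2^2*x*y*r + 8*al*be^2*a2^2*a5*x*y^2 + 8*al*be^2*a2^2*a4*x^2*y + 4*al*be^2*a2^2*a3*x*y^3 + 8*al*be^2*a2^3*x^2*y^2 - 2*al*be^2*a1*a5*x*r - 4*al*be^2*a1*a5^2*x*y - 2*al*be^2*a1*a3*x*y*r - 8*al*be^2*a1*a3*a5*x*y^2 - 8*al*be^2*a1*a3*a4*x^2*y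 - 4*al*be^2*a1*a3^2*x*y^3 - 2*al*be^2*a1*a2*x^2*r - 8*al*be^2*a1*a2*a3*x^2*y^2 + 4*al*be^2*a1*a2^2*x^3*y - 4*al*be^2*a1^2*a3*x^3*y - 2*al*be^3*a3^2*a4^2*y^3 + 4*al*be^3*a2*a3*a4*a5*y^3 + 6*al*be^3*a2*a3*a4^2*x*y^2 - 12*al*be^3*a2^2*a4*a5*x*y^2 + 2*al*be^3*a2^2*a3*a5*y^4 - 4*al*be^3*a2^2*a3*a4*x*y^3 - 12*al*be^3*a2^3*a4*x^2*y^2 - 2*al*be^3*a1*a3*a5^2*y^3 - 2*al*be^3*a1*a3^2*a5*y^4 + 4*al*be^3*a1*a3^2*a4*x*y^3 + 6*al*be^3*a1*a2*a5^2*x*y^2 + 12*al*be^3*a1*a2*a3*a4*x^2*y^2 + 6*al*be^3*a1*a2^2*a5*x^2*y^2 - 6*al*be^3*a1^2*a3*a5*x^2*y^2 - 4*al*be^4*a2^3*a5*y^3*r - 4*al*be^4*a2^3*a3*y^4*r - 4*al*be^4*a2^4*x*y^3*r + 4*al*be^4*a1*a2*a3*a5*y^3*r + 4*al*be^4*a1*a2*a3^2*y^4*r + 6*al*be^4*a1*a2^2*a5*x*y^2*r + 10*al*be^4*a1*a2^2*a3*x*y^3*r + 6*al*be^4*a1*a2^3*x^2*y^2*r - 6*al*be^4*a1^2*a3*a5*x*y^2*r - 6*al*be^4*a1^2*a3^2*x*y^3*r - 6*al*be^4*a1^2*a2*a3*x^2*y^2*r + 2*al^2*a3*a5*x*y +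 2*al^2*a3*a4*x^2 + 2*al^2*a3^2*x*y^2 + 4*al^2*a2*a3*x^2*y + 2*al^2*a1*a3*x^3 - 2*al^2*be*a3*a5*y*r - 2*al^2*be*a3*a4^2*x^2 - 2*al^2*be*a3^2*y^2*r + 4*al^2*be*a2*a5*x*r + 4*al^2*be*a2*a4*a5*x^2 + 2*al^2*be*a2*a3*x*y*r + 4*al^2*be*a2^2*x^2*r + 4*al^2*be*a2^2*a5*x^2*y + 4*al^2*be*a2^2*a4*x^3 + 2*al^2*be*a2^2*a3*x^2*y^2 + 4*al^2*be*a2^3*x^3*y - 2*al^2*be*a1*a5^2*x^2 - 4*al^2*be*a1*a3*a5*x^2*y - 4*al^2*be*a1*a3*a4*x^3 - 2*al^2*be*a1*a3^2*x^2*y^2 - 4*al^2*be*a1*a2*a3*x^3*y + 2*al^2*be*a1*a2^2*x^4 - 2*al^2*be*a1^2*a3*x^4 - 6*al^2*be^2*a3^2*a4^2*x*y^2 + 12*al^2*be^2*a2*a3*a4*a5*x*y^2 + 6*al^2*be^2*a2*a3*a4^2*x^2*y - 12*al^2*be^2*a2^2*a4*a5*x^2*y + 6*al^2*be^2*a2^2*a3*a5*x*y^3 - 12*al^2*be^2*a2^3*a4*x^3*y - 6*al^2*be^2*a1*a3*a5^2*x*y^2 - 6*al^2*be^2*a1*a3^2*a5*x*y^3 + 6*al^2*be^2*a1*a2*a5^2*x^2*y + 12*al^2*be^2*a1*a2*a3*a4*x^3*y + 6*al^2*be^2*a1*a2^2*a5*x^3*y - 6*al^2*be^2*a1^2*a3*a5*x^3*y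 + 2*al^2*be^3*a2^2*a3*a5*y^3*r + 2*al^2*be^3*a2^2*a3^2*y^4*r - 12*al^2*be^3*a2^3*a5*x*y^2*r - 10*al^2*be^3*a2^3*a3*x*y^3*r - 12*al^2*be^3*a2^4*x^2*y^2*r - 2*al^2*be^3*a1*a3^2*a5*y^3*r - 2*al^2*be^3*a1*a3^3*y^4*r + 12*al^2*be^3*a1*a2*a3*a5*x*y^2*r + 10*al^2*be^3*a1*a2*a3^2*x*y^3*r + 6*al^2*be^3*a1*a2^2*a5*x^2*y*r + 18*al^2*be^3*a1*a2^2*a3*x^2*y^2*r + 6*al^2*be^3*a1*a2^3*x^3*y*r - 6*al^2*be^3*a1^2*a3*a5*x^2*y*r - 6*al^2*be^3*a1^2*a3^2*x^2*y^2*r - 6*al^2*be^3*a1^2*a2*a3*x^3*y*r - 2*al^3*a3*a5*x*r - 2*al^3*a3^2*x*y*r - 2*al^3*a2*a3*x^2*r - 6*al^3*be*a3^2*a4^2*x^2*y + 12*al^3*be*a2*a3*a4*a5*x^2*y + 2*al^3*be*a2*a3*a4^2*x^3 - 4*al^3*be*a2^2*a4*a5*x^3 + 6*al^3*be*a2^2*a3*a5*x^2*y^2 + 4*al^3*be*a2^2*a3*a4*x^3*y - 4*al^3*be*a2^3*a4*x^4 - 6*al^3*be*a1*a3*a5^2*x^2*y - 6*al^3*be*a1*a3^2*a5*x^2*y^2 - 4*al^3*be*a1*a3^2*a4*x^3*y + 2*al^3*be*a1*a2*a5^2*x^3 + 4*al^3*be*a1*a2*a3*a4*x^4 + 2*al^3*be*a1*a2^2*a5*x^4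 - 2*al^3*be*a1^2*a3*a5*x^4 + 6*al^3*be^2*a2^2*a3*a5*x*y^2*r + 6*al^3*be^2*a2^2*a3^2*x*y^3*r - 12*al^3*be^2*a2^3*a5*x^2*y*r - 6*al^3*be^2*a2^3*a3*x^2*y^2*r - 12*al^3*be^2*a2^4*x^3*y*r - 6*al^3*be^2*a1*a3^2*a5*x*y^2*r - 6*al^3*be^2*a1*a3^3*x*y^3*r + 12*al^3*be^2*a1*a2*a3*a5*x^2*y*r + 6*al^3*be^2*a1*a2*a3^2*x^2*y^2*r + 2*al^3*be^2*a1*a2^2*a5*x^3*r + 14*al^3*be^2*a1*a2^2*a3*x^3*y*r + 2*al^3*be^2*a1*a2^3*x^4*r - 2*al^3*be^2*a1^2*a3*a5*x^3*r - 2*al^3*be^2*a1^2*a3^2*x^3*y*r - 2*al^3*be^2*a1^2*a2*a3*x^4*r - 2*al^4*a3^2*a4^2*x^3 + 4*al^4*a2*a3*a4*a5*x^3 + 2*al^4*a2^2*a3*a5*x^3*y + 2*al^4*a2^2*a3*a4*x^4 - 2*al^4*a1*a3*a5^2*x^3 - 2*al^4*a1*a3^2*a5*x^3*y - 2*al^4*a1*a3^2*a4*x^4 + 6*al^4*be*a2^2*a3*a5*x^2*y*r + 6*al^4*be*a2^2*a3^2*x^2*y^2*r - 4*al^4*be*a2^3*a5*x^3*r + 2*al^4*be*a2^3*a3*x^3*y*r - 4*al^4*be*a2^4*x^4*r - 6*al^4*be*a1*a3^2*a5*x^2*y*r - 6*al^4*be*a1*a3^3*x^2*y^2*r + 4*al^4*be*a1*a2*a3*a5*x^3*r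 - 2*al^4*be*a1*a2*a3^2*x^3*y*r + 4*al^4*be*a1*a2^2*a3*x^4*r + 2*al^5*a2^2*a3*a5*x^3*r + 2*al^5*a2^2*a3^2*x^3*y*r + 2*al^5*a2^3*a3*x^4*r - 2*al^5*a1*a3^2*a5*x^3*r - 2*al^5*a1*a3^3*x^3*y*r - 2*al^5*a1*a2*a3^2*x^4*r)"

definition "kEa2 x y r = ((-1)*be^2*a1*y - be^3*a1*a4*y + be^4*a1^2*y*r - 2*al*be*a1*x + 2*al*be^2*a2*a4*y + 2*al*be^2*a2^2*y^2 - al*be^2*a1*r - al*be^2*a1*a4*x - 2*al*be^2*a1*a3*y^2 - 3*al*be^3*a1*a2*y*r + al*be^3*a1^2*x*r + al^2*a3*y + 2*al^2*a2*x - al^2*be*a3*a4*y + 2*al^2*be*a2*r + 2*al^2*be*a2*a4*x + 4*al^2*be*a2^2*x*y - 4*al^2*be*a1*a3*x*y + 2*al^2*be^2*a2^2*y*r + al^2*be^2*a1*a3*y*r - 3*al^2*be^2*a1*a2*x*r - al^3*a3*r - al^3*a3*a4*x + 2*al^3*a2^2*x^2 - 2*al^3*a1*a3*x^2 - al^3*be*a2*a3*y*r + 2*al^3*be*a2^2*x*r + al^3*be*a1*a3*x*r - al^4*a2*a3*x*r)"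

definition "kEb2 x y r = (2*al*be*a4 + 2*al*be*a2*y + 2*al*be*a1*x - 2*al*be^2*a2*a4*y - 2*al*be^2*a2^2*y^2 + 2*al*be^2*a1*a5*y + 2*al*be^2*a1*a3*y^2 - 2*al^2*a5 - 2*al^2*a3*y - 2*al^2*a2*x + 2*al^2*be*a3*a4*y - 2*al^2*be*a2*a5*y - 2*al^2*be*a2*a4*x - 4*al^2*be*a2^2*x*y + 2*al^2*be*a1*a5*x + 4*al^2*be*a1*a3*x*y + 2*al^3*a3*a4*x - 2*al^3*a2*a5*x - 2*al^3*a2^2*x^2 + 2*al^3*a1*a3*x^2)"

definition "kcof2 x y r = (2*be^2*a1*a5*y^2 + 2*be^2*a1*a4*x*y + 2*be^2*a1*a3*y^3 + 4*be^2*a1*a2*x*y^2 + 2*be^2*a1^2*x^2*y + 2*be^3*a1*a4*y*r + 2*be^3*a1*a2*y^2*r + 2*be^3*a1^2*x*y*r - 2*be^4*a1*a3*a4^2*y^3 + 4*be^4*a1*a2*a4*a5*y^3 + 2*be^4*a1*a2^2*a5*y^4 + 2*be^4*a1*a2^2*a4*x*y^3 - 2*be^4*a1^2*a5^2*y^3 - 2*be^4*a1^2*a3*a5*y^4 - 2*be^4*a1^2*a3*a4*x*y^3 - 2*be^5*a1*a2^2*a4*y^3*r - 2*be^5*a1*a2^3*y^4*r + 2*be^5*a1^2*a3*a4*y^3*r + 2*be^5*a1^2*a2*a3*y^4*r - 2*be^5*a1^2*a2^2*x*y^3*r + 2*be^5*a1^3*a3*x*y^3*r - 2*al*be*a3*a4*y^2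 - 4*al*be*a2*a4*x*y - 2*al*be*a2*a3*y^3 - 4*al*be*a2^2*x*y^2 + 4*al*be*a1*a5*x*y + 2*al*be*a1*a4*x^2 + 2*al*be*a1*a3*x*y^2 + 2*al*be*a1*a2*x^2*y + 2*al*be*a1^2*x^3 + 2*al*be^2*a3*a4^2*y^2 - 4*al*be^2*a2*a4*y*r - 4*al*be^2*a2*a4*a5*y^2 - 4*al*be^2*a2^2*y^2*r - 4*al*be^2*a2^2*a5*y^3 - 4*al*be^2*a2^2*a4*x*y^2 - 2*al*be^2*a2^2*a3*y^4 - 4*al*be^2*a2^3*x*y^3 + 2*al*be^2*a1*a5^2*y^2 + 2*al*be^2*a1*a4*x*r + 4*al*be^2*a1*a3*a5*y^3 + 4*al*be^2*a1*a3*a4*x*y^2 + 2*al*be^2*a1*a3^2*y^4 - 2*al*be^2*a1*a2*x*y*r + 4*al*be^2*a1*a2*a3*x*y^3 - 2*al*be^2*a1*a2^2*x^2*y^2 + 2*al*be^2*a1^2*x^2*r + 2*al*be^2*a1^2*a3*x^2*y^2 + 2*al*be^3*a2*a3*a4^2*y^3 - 4*al*be^3*a2^2*a4*a5*y^3 + 2*al*be^3*a2^2*a3*a4*y^4 - 4*al*be^3*a2^3*a5*y^4 - 6*al*be^3*a1*a3*a4^2*x*y^2 - 2*al*be^3*a1*a3^2*a4*y^4 + 2*al*be^3*a1*a2*a5^2*y^3 + 12*al*be^3*a1*a2*a4*a5*x*y^2 + 4*al*be^3*a1*a2*a3*a5*y^4 + 4*al*be^3*a1*a2^2*a5*x*y^3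 + 6*al*be^3*a1*a2^2*a4*x^2*y^2 - 6*al*be^3*a1^2*a5^2*x*y^2 - 4*al*be^3*a1^2*a3*a5*x*y^3 - 6*al*be^3*a1^2*a3*a4*x^2*y^2 + 4*al*be^4*a2^3*a4*y^3*r + 4*al*be^4*a2^4*y^4*r - 4*al*be^4*a1*a2*a3*a4*y^3*r - 6*al*be^4*a1*a2^2*a4*x*y^2*r - 4*al*be^4*a1*a2^2*a3*y^4*r - 2*al*be^4*a1*a2^3*x*y^3*r + 6*al*be^4*a1^2*a3*a4*x*y^2*r + 2*al*be^4*a1^2*a2*a3*x*y^3*r - 6*al*be^4*a1^2*a2^2*x^2*y^2*r + 6*al*be^4*a1^3*a3*x^2*y^2*r - 2*al^2*a3*a4*x*y - 4*al^2*a2*a4*x^2 - 2*al^2*a2*a3*x*y^2 - 4*al^2*a2^2*x^2*y + 2*al^2*a1*a5*x^2 - 2*al^2*a1*a2*x^3 + 2*al^2*be*a3*a4*y*r + 4*al^2*be*a3*a4^2*x*y - 4*al^2*be*a2*a4*x*r - 8*al^2*be*a2*a4*a5*x*y + 2*al^2*be*a2*a3*y^2*r - 4*al^2*be*a2^2*x*y*r - 8*al^2*be*a2^2*a5*x*y^2 - 8*al^2*be*a2^2*a4*x^2*y - 4*al^2*be*a2^2*a3*x*y^3 - 8*al^2*be*a2^3*x^2*y^2 + 4*al^2*be*a1*a5^2*x*y + 2*al^2*be*a1*a3*x*y*r + 8*al^2*be*a1*a3*a5*x*y^2 + 8*al^2*be*a1*a3*a4*x^2*y + 4*al^2*be*a1*a3^2*x*y^3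 - 4*al^2*be*a1*a2*x^2*r + 8*al^2*be*a1*a2*a3*x^2*y^2 - 4*al^2*be*a1*a2^2*x^3*y + 4*al^2*be*a1^2*a3*x^3*y + 6*al^2*be^2*a2*a3*a4^2*x*y^2 - 12*al^2*be^2*a2^2*a4*a5*x*y^2 + 6*al^2*be^2*a2^2*a3*a4*x*y^3 - 12*al^2*be^2*a2^3*a5*x*y^3 - 6*al^2*be^2*a1*a3*a4^2*x^2*y - 6*al^2*be^2*a1*a3^2*a4*x*y^3 + 6*al^2*be^2*a1*a2*a5^2*x*y^2 + 12*al^2*be^2*a1*a2*a4*a5*x^2*y + 12*al^2*be^2*a1*a2*a3*a5*x*y^3 + 6*al^2*be^2*a1*a2^2*a4*x^3*y - 6*al^2*be^2*a1^2*a5^2*x^2*y - 6*al^2*be^2*a1^2*a3*a4*x^3*y - 2*al^2*be^3*a2^2*a3*a4*y^3*r + 12*al^2*be^3*a2^3*a4*x*y^2*r - 2*al^2*be^3*a2^3*a3*y^4*r + 12*al^2*be^3*a2^4*x*y^3*r + 2*al^2*be^3*a1*a3^2*a4*y^3*r - 12*al^2*be^3*a1*a2*a3*a4*x*y^2*r + 2*al^2*be^3*a1*a2*a3^2*y^4*r - 6*al^2*be^3*a1*a2^2*a4*x^2*y*r - 14*al^2*be^3*a1*a2^2*a3*x*y^3*r + 6*al^2*be^3*a1*a2^3*x^2*y^2*r + 6*al^2*be^3*a1^2*a3*a4*x^2*y*r + 2*al^2*be^3*a1^2*a3^2*x*y^3*r - 6*al^2*be^3*a1^2*a2*a3*x^2*y^2*r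 - 6*al^2*be^3*a1^2*a2^2*x^3*y*r + 6*al^2*be^3*a1^3*a3*x^3*y*r + 2*al^3*a3*a4*x*r + 2*al^3*a3*a4^2*x^2 - 4*al^3*a2*a4*a5*x^2 + 2*al^3*a2*a3*x*y*r - 4*al^3*a2^2*a5*x^2*y - 4*al^3*a2^2*a4*x^3 - 2*al^3*a2^2*a3*x^2*y^2 - 4*al^3*a2^3*x^3*y + 2*al^3*a1*a5^2*x^2 + 2*al^3*a1*a3*x^2*r + 4*al^3*a1*a3*a5*x^2*y + 4*al^3*a1*a3*a4*x^3 + 2*al^3*a1*a3^2*x^2*y^2 + 4*al^3*a1*a2*a3*x^3*y - 2*al^3*a1*a2^2*x^4 + 2*al^3*a1^2*a3*x^4 + 6*al^3*be*a2*a3*a4^2*x^2*y - 12*al^3*be*a2^2*a4*a5*x^2*y + 6*al^3*be*a2^2*a3*a4*x^2*y^2 - 12*al^3*be*a2^3*a5*x^2*y^2 - 2*al^3*be*a1*a3*a4^2*x^3 - 6*al^3*be*a1*a3^2*a4*x^2*y^2 + 6*al^3*be*a1*a2*a5^2*x^2*y + 4*al^3*be*a1*a2*a4*a5*x^3 + 12*al^3*be*a1*a2*a3*a5*x^2*y^2 - 4*al^3*be*a1*a2^2*a5*x^3*y + 2*al^3*be*a1*a2^2*a4*x^4 - 2*al^3*be*a1^2*a5^2*x^3 + 4*al^3*be*a1^2*a3*a5*x^3*y - 2*al^3*be*a1^2*a3*a4*x^4 - 6*al^3*be^2*a2^2*a3*a4*x*y^2*r + 12*al^3*be^2*a2^3*a4*x^2*y*r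 - 6*al^3*be^2*a2^3*a3*x*y^3*r + 12*al^3*be^2*a2^4*x^2*y^2*r + 6*al^3*be^2*a1*a3^2*a4*x*y^2*r - 12*al^3*be^2*a1*a2*a3*a4*x^2*y*r + 6*al^3*be^2*a1*a2*a3^2*x*y^3*r - 2*al^3*be^2*a1*a2^2*a4*x^3*r - 18*al^3*be^2*a1*a2^2*a3*x^2*y^2*r + 10*al^3*be^2*a1*a2^3*x^3*y*r + 2*al^3*be^2*a1^2*a3*a4*x^3*r + 6*al^3*be^2*a1^2*a3^2*x^2*y^2*r - 10*al^3*be^2*a1^2*a2*a3*x^3*y*r - 2*al^3*be^2*a1^2*a2^2*x^4*r + 2*al^3*be^2*a1^3*a3*x^4*r + 2*al^4*a2*a3*a4^2*x^3 - 4*al^4*a2^2*a4*a5*x^3 + 2*al^4*a2^2*a3*a4*x^3*y - 4*al^4*a2^3*a5*x^3*y - 2*al^4*a1*a3^2*a4*x^3*y + 2*al^4*a1*a2*a5^2*x^3 + 4*al^4*a1*a2*a3*a5*x^3*y - 2*al^4*a1*a2^2*a5*x^4 + 2*al^4*a1^2*a3*a5*x^4 - 6*al^4*be*a2^2*a3*a4*x^2*y*r + 4*al^4*be*a2^3*a4*x^3*r - 6*al^4*be*a2^3*a3*x^2*y^2*r + 4*al^4*be*a2^4*x^3*y*r + 6*al^4*be*a1*a3^2*a4*x^2*y*r - 4*al^4*be*a1*a2*a3*a4*x^3*r + 6*al^4*be*a1*a2*a3^2*x^2*y^2*r - 10*al^4*be*a1*a2^2*a3*x^3*y*r + 4*al^4*be*a1*a2^3*x^4*r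 + 6*al^4*be*a1^2*a3^2*x^3*y*r - 4*al^4*be*a1^2*a2*a3*x^4*r - 2*al^5*a2^2*a3*a4*x^3*r - 2*al^5*a2^3*a3*x^3*y*r + 2*al^5*a1*a3^2*a4*x^3*r + 2*al^5*a1*a2*a3^2*x^3*y*r - 2*al^5*a1*a2^2*a3*x^4*r + 2*al^5*a1^2*a3^2*x^4*r)"

lemma pen_B0:
  "kD x y * kC2 (x + t*(-r*be - x)) (y + t*(r*al - y)) - kC2 x y * kD (x + t*(-r*be - x)) (y + t*(r*al - y))
   = kG1 x y r * t + kG2 x y r * t^2"
  unfolding kD_def kC2_def kH2_def kl_def kg1_def kg2_def kG1_def kG2_def
  by algebra

lemma core_id1: "(r*khh - knm) * kcof1 x y r = kEa1 x y r * (- kG1 x y r) + kEb1 x y r * kG2 x y r"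
  unfolding khh_def knm_def kcof1_def kEa1_def kEb1_def kG1_def kG2_def
  by algebra

lemma core_id2: "(r*khh - knm) * kcof2 x y r = kEa2 x y r * (- kG1 x y r) + kEb2 x y r * kG2 x y r"
  unfolding khh_def knm_def kcof2_def kEa2_def kEb2_def kG1_def kG2_def
  by algebra

lemma line_G2: "kG2 (x - s*be) (y + s*al) r = kG2 x y r + kG2c x y r * s + khh * s^2"
  unfolding khh_def kG2c_def kG2_def by algebra

lemma line_G1: "kG1 (x - s*be) (y + s*al) r = kG1 x y r + kG1c x y r * s - 2*khh * s^2"
  unfolding khh_def kG1c_def kG1_def by algebra

lemma line_det: "kdet (x - s*be) (y + s*al) = kdet x y - khh * s"
  unfolding khh_def kdet_def km11_def km12_def km21_def km22_def kl_def kF1_def kF2_def by algebra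

lemma line_l: "kl (x - s*be) (y + s*al) = kl x y"
  unfolding kl_def by algebra

lemma line_D: "kD (x - s*be) (y + s*al) = kD x y"
  unfolding kD_def line_l ..

lemma core:
  assumes hh: "khh \<noteq> 0" and rr: "r*khh = knm" and g2: "kG2 x y r \<noteq> 0"
    and tt: "kG2 x y r * t + kG1 x y r = 0"
  defines "X \<equiv> x + t*(-r*be - x)" and "Y \<equiv> y + t*(r*al - y)"
  defines "s \<equiv> -2*kgw X Y/khh"
  shows "kE1 x y (X - s*be) (Y + s*al) = 0 \<and> kE2 x y (X - s*be) (Y + s*al) = 0"
proof -
  have hs: "s*khh = -2*kgw X Y" using hh unfolding s_def by simp
  have l1: "khh * kE1 x y (X - s*be) (Y + s*al) = khh * kE1 x y X Y + (s*khh) * (-be - kl x y*(a3*al - a2*be))"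
    unfolding kE1_def kl_def kF1_def by algebra
  have l2: "khh * kE2 x y (X - s*be) (Y + s*al) = khh * kE2 x y X Y + (s*khh) * (al - kl x y*(-a1*(-be) - a2*al))"
    unfolding kE2_def kl_def kF2_def by algebra
  have m1: "khh * kE1 x y X Y + (-2*kgw X Y) * (-be - kl x y*(a3*al - a2*be)) = kEa1 x y r * t + kEb1 x y r"
    unfolding X_def Y_def kE1_def kl_def kF1_def kgw_def khh_def kEa1_def kEb1_def by algebra
  have m2: "khh * kE2 x y X Y + (-2*kgw X Y) * (al - kl x y*(-a1*(-be) - a2*al)) = kEa2 x y r * t + kEb2 x y r"
    unfolding X_def Y_def kE2_def kl_def kF2_def kgw_def khh_def kEa2_def kEb2_def by algebra
  have tt': "kG2 x y r * t = - kG1 x y r" using tt by (simp add: eq_neg_iff_add_eq_0)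
  have z1: "kG2 x y r * (kEa1 x y r * t + kEb1 x y r) = 0"
  proof -
    have "kG2 x y r * (kEa1 x y r * t + kEb1 x y r) = kEa1 x y r * (kG2 x y r * t) + kEb1 x y r * kG2 x y r"
      by (simp add: algebra_simps)
    also have "\<dots> = (r*khh - knm) * kcof1 x y r" using core_id1 tt' by simp
    finally show ?thesis using rr by simp
  qed
  have z2: "kG2 x y r * (kEa2 x y r * t + kEb2 x y r) = 0"
  proof -
    have "kG2 x y r * (kEa2 x y r * t + kEb2 x y r) = kEa2 x y r * (kG2 x y r * t) + kEb2 x y r * kG2 x y r"
      by (simp add: algebra_simps)
    also have "\<dots> = (r*khh - knm) * kcof2 x y r" using core_id2 tt' by simp
    finally show ?thesis using rr by simp
  qed
  show ?thesis using z1 z2 g2 hh l1 l2 m1 m2 hs by simp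
qed

lemma eq_by_diff: "2 * (a - b) = c \<Longrightarrow> (a = b) \<longleftrightarrow> (c = (0::complex))"
  by auto

lemma kahan_eq_iff:
  assumes fe: "\<And>x y. f (x,y) = (kl x y * kF1 x y, kl x y * kF2 x y)"
  shows "kahan_eq f (x,y) (X,Y) \<longleftrightarrow> kE1 x y X Y = 0 \<and> kE2 x y X Y = 0"
  unfolding kahan_eq_def vf_polar_def vf_lin_def vf_quad_def vf_const_def pt_add_def pt_scale_def pt_sub_def
  apply (simp only: fe fst_conv snd_conv prod.inject)
  apply (rule arg_cong2[where f="(\<and>)"])
   apply (rule eq_by_diff)
   apply (unfold kE1_def kl_def kF1_def divide_inverse)[1]
   apply algebra
  apply (rule eq_by_diff)
  apply (unfold kE2_def kl_def kF2_def divide_inverse)[1]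
  apply algebra
  done

lemma kE1_lin: "kE1 x y X Y = km11 x y * X + km12 x y * Y - (x + kl x y * a5)"
  unfolding kE1_def km11_def km12_def kl_def kF1_def by algebra

lemma kE2_lin: "kE2 x y X Y = km21 x y * X + km22 x y * Y - (y - kl x y * a4)"
  unfolding kE2_def km21_def km22_def kl_def kF2_def by algebra

end

lemma lin2_unique:
  fixes m11 m12 m21 m22 c1 c2 :: complex
  assumes d: "m11*m22 - m12*m21 \<noteq> 0"
  shows "\<exists>!p. m11 * fst p + m12 * snd p - c1 = 0 \<and> m21 * fst p + m22 * snd p - c2 = 0"
proof
  let ?d = "m11*m22 - m12*m21"
  have a1: "m11 * ((m22*c1 - m12*c2)/?d) + m12 * ((m11*c2 - m21*c1)/?d) = (m11 * (m22*c1 - m12*c2) + m12 * (m11*c2 - m21*c1))/?d"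
    by (simp add: add_divide_distrib)
  also have "\<dots> = (c1 * ?d)/?d" by (rule arg_cong[where f="\<lambda>z. z/?d"]) algebra
  also have "\<dots> = c1" using d by simp
  finally have r1: "m11 * ((m22*c1 - m12*c2)/?d) + m12 * ((m11*c2 - m21*c1)/?d) = c1" .
  have "m21 * ((m22*c1 - m12*c2)/?d) + m22 * ((m11*c2 - m21*c1)/?d) = (m21 * (m22*c1 - m12*c2) + m22 * (m11*c2 - m21*c1))/?d"
    by (simp add: add_divide_distrib)
  also have "\<dots> = (c2 * ?d)/?d" by (rule arg_cong[where f="\<lambda>z. z/?d"]) algebra
  also have "\<dots> = c2" using d by simp
  finally have r2: "m21 * ((m22*c1 - m12*c2)/?d) + m22 * ((m11*c2 - m21*c1)/?d) = c2" .
  show "m11 * fst ((m22*c1 - m12*c2)/?d, (m11*c2 - m21*c1)/?d) + m12 * snd ((m22*c1 - m12*c2)/?d, (m11*c2 - m21*c1)/?d) - c1 = 0 \<and>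
        m21 * fst ((m22*c1 - m12*c2)/?d, (m11*c2 - m21*c1)/?d) + m22 * snd ((m22*c1 - m12*c2)/?d, (m11*c2 - m21*c1)/?d) - c2 = 0"
    using r1 r2 by simp
next
  fix p assume h: "m11 * fst p + m12 * snd p - c1 = 0 \<and> m21 * fst p + m22 * snd p - c2 = 0"
  let ?d = "m11*m22 - m12*m21"
  have "?d * fst p = m22*c1 - m12*c2" using h by algebra
  moreover have "?d * snd p = m11*c2 - m21*c1" using h by algebra
  ultimately show "p = ((m22*c1 - m12*c2)/?d, (m11*c2 - m21*c1)/?d)"
    using d by (metis nonzero_mult_div_cancel_left prod.collapse)
qed

lemma finite_avoid:
  fixes Z :: "complex set"
  assumes "finite Z" "0 < d"
  shows "\<exists>s. norm s < d \<and> s \<notin> Z"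
proof -
  obtain e where e: "e > 0" "\<forall>w\<in>ball 0 e. w \<noteq> 0 \<longrightarrow> w \<notin> Z"
    using finite_ball_avoid[of UNIV Z 0] assms by auto
  let ?w = "complex_of_real (min e d / 2)"
  have "norm ?w < e" "norm ?w < d" "?w \<noteq> 0" using e assms by auto
  then show ?thesis using e by (metis dist_0_norm mem_ball)
qed

lemma switch_char:
  assumes pe: "\<And>t. pencil_member_through C D P (pt_add P (pt_scale t (line_dir B P))) = k1*t + k2*t^2"
  shows "switch_rel C D B P Q \<longleftrightarrow> k2 \<noteq> 0 \<and> Q = pt_add P (pt_scale (-k1/k2) (line_dir B P))"
proof
  assume "switch_rel C D B P Q"
  then obtain A t0 where A: "A \<noteq> 0" and h: "\<And>t. pencil_member_through C D P (pt_add P (pt_scale t (line_dir B P))) = A * t * (t - t0)"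
    and Q: "Q = pt_add P (pt_scale t0 (line_dir B P))"
    unfolding switch_rel_def by blast
  have e1': "k1*1 + k2*1^2 = A*1*(1 - t0)" using h[of 1] pe[of 1] by metis
  have e2': "k1*(-1) + k2*(-1)^2 = A*(-1)*(-1 - t0)" using h[of "-1"] pe[of "-1"] by metis
  have e1: "k1 + k2 = A * (1 - t0)" using e1' by simp
  have e2: "-k1 + k2 = A * (1 + t0)" using e2' by (simp add: algebra_simps)
  have "k2 = A" using e1 e2 by algebra
  moreover have "k1 = - A * t0" using e1 e2 by algebra
  ultimately show "k2 \<noteq> 0 \<and> Q = pt_add P (pt_scale (-k1/k2) (line_dir B P))"
    using A Q by simp
next
  assume h: "k2 \<noteq> 0 \<and> Q = pt_add P (pt_scale (-k1/k2) (line_dir B P))"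
  show "switch_rel C D B P Q"
    unfolding switch_rel_def
  proof (intro exI conjI allI)
    show "k2 \<noteq> 0" using h by simp
    show "Q = pt_add P (pt_scale (-k1/k2) (line_dir B P))" using h by simp
    fix t
    show "pencil_member_through C D P (pt_add P (pt_scale t (line_dir B P))) = k2 * t * (t - (-k1/k2))"
      using h by (simp add: pe field_simps power2_eq_square)
  qed
qed

lemma switch_def_char:
  assumes pe: "\<And>t. pencil_member_through C D P (pt_add P (pt_scale t (line_dir B P))) = k1*t + k2*t^2"
  shows "switch_defined C D B P \<longleftrightarrow> k2 \<noteq> 0"
    and "k2 \<noteq> 0 \<Longrightarrow> switch_map C D B P = pt_add P (pt_scale (-k1/k2) (line_dir B P))"
proof -
  show "switch_defined C D B P \<longleftrightarrow> k2 \<noteq> 0"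
    unfolding switch_defined_def using switch_char[OF pe] by blast
  show "k2 \<noteq> 0 \<Longrightarrow> switch_map C D B P = pt_add P (pt_scale (-k1/k2) (line_dir B P))"
    unfolding switch_map_def using switch_char[OF pe] by (metis the_equality)
qed

lemma kahan_map_eq: "kahan_defined f P \<Longrightarrow> kahan_eq f P X \<Longrightarrow> kahan_map f P = X"
  unfolding kahan_defined_def kahan_map_def by (rule the1_equality)


context kp
begin

definition "kN x y r = (kG2 x y r)^2 - kg1*(kl x y)^2*(kG2 x y r + kG1 x y r)^2"

lemma kahan_def_det:
  assumes fe: "\<And>x y. f (x,y) = (kl x y * kF1 x y, kl x y * kF2 x y)" and d: "kdet x y \<noteq> 0"
  shows "kahan_defined f (x,y)"
proof -
  have eq: "kahan_eq f (x,y) p \<longleftrightarrow> (km11 x y * fst p + km12 x y * snd p - (x + kl x y * a5) = 0 \<and>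
            km21 x y * fst p + km22 x y * snd p - (y - kl x y * a4) = 0)" for p
    using kahan_eq_iff[OF fe, of x y "fst p" "snd p"] kE1_lin kE2_lin by simp
  show ?thesis unfolding kahan_defined_def eq
    using lin2_unique d unfolding kdet_def by blast
qed

lemma pen_Binf:
  "kD X Y * kC2 (X + t*(-be)) (Y + t*al) - kC2 X Y * kD (X + t*(-be)) (Y + t*al)
    = kD X Y * (2*kgw X Y) * t + kD X Y * khh * t^2"
  unfolding kD_def kC2_def kH2_def kl_def kg1_def kg2_def kgw_def khh_def by algebra

lemma D_Q1:
  assumes g: "kG2 x y r \<noteq> 0" and t: "t0 = -kG1 x y r/kG2 x y r"
  shows "kD (x + t0*(-r*be - x)) (y + t0*(r*al - y)) * (kG2 x y r)^2 = kN x y r"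
proof -
  have l: "kl (x + t0*(-r*be - x)) (y + t0*(r*al - y)) = kl x y * (1 - t0)"
    unfolding kl_def by algebra
  have k: "kG2 x y r * (1 - t0) = kG2 x y r + kG1 x y r" using g t by (simp add: field_simps)
  show ?thesis unfolding kD_def kN_def l using k by algebra
qed

lemma coeff4: "coeff ([:c0,c1,c2:] * [:b0,b1,b2:]) 4 = c2 * (b2::complex)"
  by (simp add: coeff_mult eval_nat_numeral)

lemma main:
  fixes f :: "point \<Rightarrow> point" and C D :: "point \<Rightarrow> complex" and r :: complex
  assumes fe: "\<And>x y. f (x,y) = (kl x y * kF1 x y, kl x y * kF2 x y)"
    and Ce: "\<And>x y. C (x,y) = kC2 x y / 2" and De: "\<And>x y. D (x,y) = kD x y"
    and hh: "khh \<noteq> 0" and rr: "r * khh = knm" and nz: "al \<noteq> 0 \<or> be \<noteq> 0"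
    and B0: "B0 = (r*(-be), r*al, 1)" and Binf: "Binf = (-be, al, 0)"
  shows "(\<forall>P. kahan_defined f P \<and> switch_defined C D B0 P
              \<and> switch_defined C D Binf (switch_map C D B0 P) \<longrightarrow>
            kahan_map f P = switch_map C D Binf (switch_map C D B0 P))
       \<and> closure {P. kahan_defined f P \<and> switch_defined C D B0 P
              \<and> switch_defined C D Binf (switch_map C D B0 P)} = UNIV"
proof -
  have peB0: "pencil_member_through C D (x,y) (pt_add (x,y) (pt_scale t (line_dir B0 (x,y))))
      = (kG1 x y r/2)*t + (kG2 x y r/2)*t^2" for x y t
  proof -
    have e: "pt_add (x,y) (pt_scale t (line_dir B0 (x,y))) = (x + t*(-r*be - x), y + t*(r*al - y))"
      unfolding B0 pt_add_def pt_scale_def line_dir_def by simp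
    have "pencil_member_through C D (x,y) (pt_add (x,y) (pt_scale t (line_dir B0 (x,y))))
      = (kD x y * kC2 (x + t*(-r*be - x)) (y + t*(r*al - y)) - kC2 x y * kD (x + t*(-r*be - x)) (y + t*(r*al - y)))/2"
      unfolding pencil_member_through_def e Ce De by (simp add: field_simps)
    also have "\<dots> = (kG1 x y r * t + kG2 x y r * t^2)/2" unfolding pen_B0 ..
    finally show ?thesis by (simp add: field_simps)
  qed
  have peBi: "pencil_member_through C D (X,Y) (pt_add (X,Y) (pt_scale t (line_dir Binf (X,Y))))
      = (kD X Y * kgw X Y)*t + (kD X Y * khh/2)*t^2" for X Y t
  proof -
    have e: "pt_add (X,Y) (pt_scale t (line_dir Binf (X,Y))) = (X + t*(-be), Y + t*al)"
      unfolding Binf pt_add_def pt_scale_def line_dir_def by simp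
    have "pencil_member_through C D (X,Y) (pt_add (X,Y) (pt_scale t (line_dir Binf (X,Y))))
      = (kD X Y * kC2 (X + t*(-be)) (Y + t*al) - kC2 X Y * kD (X + t*(-be)) (Y + t*al))/2"
      unfolding pencil_member_through_def e Ce De by (simp add: field_simps)
    also have "\<dots> = (kD X Y * (2*kgw X Y) * t + kD X Y * khh * t^2)/2" unfolding pen_Binf ..
    finally show ?thesis by (simp add: field_simps)
  qed
  have sB0: "switch_defined C D B0 (x,y) \<longleftrightarrow> kG2 x y r \<noteq> 0" for x y
    using switch_def_char(1)[OF peB0] by simp
  have mB0: "switch_map C D B0 (x,y) = (x + (-kG1 x y r/kG2 x y r)*(-r*be - x), y + (-kG1 x y r/kG2 x y r)*(r*al - y))"
    if "kG2 x y r \<noteq> 0" for x y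
  proof -
    have "switch_map C D B0 (x,y) = pt_add (x,y) (pt_scale (-(kG1 x y r/2)/(kG2 x y r/2)) (line_dir B0 (x,y)))"
      using switch_def_char(2)[OF peB0] that by simp
    also have "-(kG1 x y r/2)/(kG2 x y r/2) = -kG1 x y r/kG2 x y r" by simp
    finally show ?thesis unfolding B0 pt_add_def pt_scale_def line_dir_def by simp
  qed
  have sBi: "switch_defined C D Binf (X,Y) \<longleftrightarrow> kD X Y \<noteq> 0" for X Y
    using switch_def_char(1)[OF peBi] hh by simp
  have mBi: "switch_map C D Binf (X,Y) = (X - (-2*kgw X Y/khh)*be, Y + (-2*kgw X Y/khh)*al)"
    if "kD X Y \<noteq> 0" for X Y
  proof -
    have "switch_map C D Binf (X,Y) = pt_add (X,Y) (pt_scale (-(kD X Y * kgw X Y)/(kD X Y * khh/2)) (line_dir Binf (X,Y)))"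
      using switch_def_char(2)[OF peBi] that hh by simp
    also have "-(kD X Y * kgw X Y)/(kD X Y * khh/2) = -2*kgw X Y/khh" using that hh by (simp add: field_simps)
    finally show ?thesis unfolding Binf pt_add_def pt_scale_def line_dir_def by (simp add: algebra_simps)
  qed
  have pw: "kahan_map f P = switch_map C D Binf (switch_map C D B0 P)"
    if h: "kahan_defined f P \<and> switch_defined C D B0 P \<and> switch_defined C D Binf (switch_map C D B0 P)" for P
  proof -
    obtain x y where P: "P = (x,y)" by (cases P)
    define t0 where "t0 = -kG1 x y r/kG2 x y r"
    define X where "X = x + t0*(-r*be - x)"
    define Y where "Y = y + t0*(r*al - y)"
    define s where "s = -2*kgw X Y/khh"
    have g2: "kG2 x y r \<noteq> 0" using h sB0 P by simp
    have m0: "switch_map C D B0 P = (X,Y)" using mB0[OF g2] P X_def Y_def t0_def by simp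
    have dX: "kD X Y \<noteq> 0" using h m0 sBi by simp
    have m1: "switch_map C D Binf (X,Y) = (X - s*be, Y + s*al)" using mBi[OF dX] s_def by simp
    have tt: "kG2 x y r * t0 + kG1 x y r = 0" using g2 t0_def by (simp add: field_simps)
    have "kE1 x y (X - s*be) (Y + s*al) = 0 \<and> kE2 x y (X - s*be) (Y + s*al) = 0"
      using core[OF hh rr g2 tt] X_def Y_def s_def by simp
    hence "kahan_eq f (x,y) (X - s*be, Y + s*al)" using kahan_eq_iff[OF fe] by simp
    thus ?thesis using kahan_map_eq h P m0 m1 by simp
  qed
  let ?S = "{P. kahan_defined f P \<and> switch_defined C D B0 P \<and> switch_defined C D Binf (switch_map C D B0 P)}"
  have good: "(x,y) \<in> ?S" if g: "kdet x y \<noteq> 0" "kG2 x y r \<noteq> 0" "kN x y r \<noteq> 0" for x y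
  proof -
    define t0 where "t0 = -kG1 x y r/kG2 x y r"
    define X where "X = x + t0*(-r*be - x)"
    define Y where "Y = y + t0*(r*al - y)"
    have m0: "switch_map C D B0 (x,y) = (X,Y)" using mB0[OF g(2)] X_def Y_def t0_def by simp
    have "kD X Y * (kG2 x y r)^2 = kN x y r" using D_Q1[OF g(2) t0_def] X_def Y_def by simp
    hence "kD X Y \<noteq> 0" using g(3) by auto
    thus ?thesis using kahan_def_det[OF fe g(1)] sB0 g(2) m0 sBi by simp
  qed
  have approx: "\<exists>P\<in>?S. dist P (x0,y0) < e" if e: "e > 0" for x0 y0 e
  proof -
    obtain d1 d2 :: complex where dd: "kl d1 d2 \<noteq> 0" and dn: "norm d1 + norm d2 = 1"
    proof (cases "al = 0")
      case True
      have "kl 0 1 = be" unfolding kl_def by simp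
      then have "kl 0 1 \<noteq> 0" "norm (0::complex) + norm (1::complex) = 1" using nz True by simp_all
      then show ?thesis using that by blast
    next
      case False
      then have "kl 1 0 \<noteq> 0" "norm (1::complex) + norm (0::complex) = 1" by (simp_all add: kl_def)
      then show ?thesis using that by blast
    qed
    have Z1fin: "finite {s. kD (x0 + s*d1) (y0 + s*d2) = 0}"
    proof (cases "kg1 = 0")
      case True
      then have "kD a b = 1" for a b by (simp add: kD_def)
      then show ?thesis by simp
    next
      case False
      let ?p = "[:kD x0 y0, -2*kg1*kl x0 y0*kl d1 d2, -kg1*(kl d1 d2)^2:]"
      have ev: "kD (x0 + s*d1) (y0 + s*d2) = poly ?p s" for s
        unfolding kD_def kl_def by (simp; algebra)
      have "?p \<noteq> 0" using False dd by simp
      then show ?thesis unfolding ev by (rule poly_roots_finite)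
    qed
    obtain s1 where s1: "norm s1 < e/2" "kD (x0 + s1*d1) (y0 + s1*d2) \<noteq> 0"
      using finite_avoid[OF Z1fin, of "e/2"] e by auto
    define x1 where "x1 = x0 + s1*d1"
    define y1 where "y1 = y0 + s1*d2"
    have D1: "kD x1 y1 \<noteq> 0" using s1 x1_def y1_def by simp
    define pdet where "pdet = [:kdet x1 y1, -khh:]"
    define pG2 where "pG2 = [:kG2 x1 y1 r, kG2c x1 y1 r, khh:]"
    define pG1 where "pG1 = [:kG1 x1 y1 r, kG1c x1 y1 r, -2*khh:]"
    define pN where "pN = pG2*pG2 - smult (kg1*(kl x1 y1)^2) ((pG1+pG2)*(pG1+pG2))"
    have evdet: "poly pdet s = kdet (x1 - s*be) (y1 + s*al)" for s
      unfolding line_det by (simp add: pdet_def algebra_simps)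
    have evG2: "poly pG2 s = kG2 (x1 - s*be) (y1 + s*al) r" for s
      unfolding line_G2 by (simp add: pG2_def algebra_simps power2_eq_square)
    have evG1: "poly pG1 s = kG1 (x1 - s*be) (y1 + s*al) r" for s
      unfolding line_G1 by (simp add: pG1_def algebra_simps power2_eq_square)
    have evN: "poly pN s = kN (x1 - s*be) (y1 + s*al) r" for s
    proof -
      have "poly pN s = (poly pG2 s)^2 - kg1*(kl x1 y1)^2*(poly pG1 s + poly pG2 s)^2"
        by (simp add: pN_def power2_eq_square)
      also have "\<dots> = kN (x1 - s*be) (y1 + s*al) r" by (simp add: evG1 evG2 kN_def line_l add.commute)
      finally show ?thesis .
    qed
    have cN: "coeff pN 4 = khh^2 * kD x1 y1"
    proof -
      have a: "pG1 + pG2 = [:kG1 x1 y1 r + kG2 x1 y1 r, kG1c x1 y1 r + kG2c x1 y1 r, -khh:]"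
        by (simp add: pG1_def pG2_def)
      have "coeff pN 4 = khh * khh - kg1*(kl x1 y1)^2 * ((-khh) * (-khh))"
        unfolding pN_def coeff_diff coeff_smult a unfolding pG2_def coeff4 ..
      also have "\<dots> = khh^2 * kD x1 y1" unfolding kD_def by algebra
      finally show ?thesis .
    qed
    have pN0: "pN \<noteq> 0" using cN hh D1 by auto
    have pdet0: "pdet \<noteq> 0" using hh by (simp add: pdet_def)
    have pG20: "pG2 \<noteq> 0" using hh by (simp add: pG2_def)
    have "pdet * pG2 * pN \<noteq> 0" using pN0 pdet0 pG20 by simp
    then have Z2fin: "finite {s. poly (pdet * pG2 * pN) s = 0}" by (rule poly_roots_finite)
    define K where "K = 1 + norm al + norm be"
    have K: "K > 0" unfolding K_def by (simp add: add_pos_nonneg)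
    obtain s2 where s2: "norm s2 < e/(2*K)" "poly (pdet * pG2 * pN) s2 \<noteq> 0"
      using finite_avoid[OF Z2fin, of "e/(2*K)"] e K by auto
    have nz3: "kdet (x1 - s2*be) (y1 + s2*al) \<noteq> 0" "kG2 (x1 - s2*be) (y1 + s2*al) r \<noteq> 0"
      "kN (x1 - s2*be) (y1 + s2*al) r \<noteq> 0"
      using s2(2) evdet evG2 evN by auto
    have inS: "(x1 - s2*be, y1 + s2*al) \<in> ?S" using good[OF nz3] .
    have "dist (x1 - s2*be, y1 + s2*al) (x0,y0) = norm (s1*d1 - s2*be, s1*d2 + s2*al)"
      unfolding dist_norm x1_def y1_def by (simp add: algebra_simps)
    also have "\<dots> \<le> norm (s1*d1 - s2*be) + norm (s1*d2 + s2*al)" by (rule norm_Pair_le)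
    also have "\<dots> \<le> (norm s1 * norm d1 + norm s2 * norm be) + (norm s1 * norm d2 + norm s2 * norm al)"
      by (intro add_mono order_trans[OF norm_triangle_ineq4] order_trans[OF norm_triangle_ineq])
         (simp_all add: norm_mult)
    also have "\<dots> = norm s1 * (norm d1 + norm d2) + norm s2 * (norm al + norm be)" by (simp add: algebra_simps)
    also have "\<dots> \<le> norm s1 + norm s2 * K" using dn unfolding K_def
      by (simp add: mult_left_mono)
    also have "\<dots> < e/2 + e/2"
    proof -
      have "norm s2 * K < e/(2*K) * K" using s2(1) K by (intro mult_strict_right_mono)
      also have "\<dots> = e/2" using K by simp
      finally show ?thesis using s1(1) by simp
    qed
    finally show ?thesis using inS by auto
  qed
  have "closure ?S = UNIV"
  proof -
    have "P \<in> closure ?S" for P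
    proof -
      obtain x0 y0 where "P = (x0,y0)" by (cases P)
      then show ?thesis unfolding closure_approachable using approx by blast
    qed
    then show ?thesis by blast
  qed
  then show ?thesis using pw by blast
qed

end

theorem theorem2:
  fixes \<alpha> \<beta> a1 a2 a3 a4 a5 :: complex
    and l H :: "complex \<Rightarrow> complex \<Rightarrow> complex"
    and f :: "point \<Rightarrow> point"
    and C D :: "point \<Rightarrow> complex"
  assumes not_both_zero: "\<alpha> \<noteq> 0 \<or> \<beta> \<noteq> 0"
  defines "l \<equiv> (\<lambda>x y. \<alpha> * x + \<beta> * y)"
  defines "H \<equiv> (\<lambda>x y. a1/2 * x^2 + a2 * x * y + a3/2 * y^2 + a4 * x + a5 * y)"
  defines "f \<equiv> (\<lambda>(x, y). (l x y * deriv (\<lambda>t. H x t) y, - (l x y * deriv (\<lambda>t. H t y) x)))"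
  defines "\<gamma>1 \<equiv> a2^2 - a1 * a3"
  defines "\<gamma>2 \<equiv> a3 * a4^2 + a1 * a5^2 - 2 * a2 * a4 * a5"
  defines "C \<equiv> (\<lambda>(x, y). H x y - \<gamma>2/2 * (l x y)^2)"
  defines "D \<equiv> (\<lambda>(x, y). 1 - \<gamma>1 * (l x y)^2)"
  defines "\<rho> \<equiv> (1 + (\<beta> * a4 - \<alpha> * a5)) / (\<beta>^2 * a1 - 2 * \<alpha> * \<beta> * a2 + \<alpha>^2 * a3)"
  defines "B0 \<equiv> (\<rho> * (-\<beta>), \<rho> * \<alpha>, 1)"
  defines "Binf \<equiv> (-\<beta>, \<alpha>, 0)"
  assumes rho_denom: "\<beta>^2 * a1 - 2 * \<alpha> * \<beta> * a2 + \<alpha>^2 * a3 \<noteq> 0"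
  assumes C_nonsingular: "conic_nonsingular C"
  shows "(\<forall>P. kahan_defined f P \<and> switch_defined C D B0 P
              \<and> switch_defined C D Binf (switch_map C D B0 P) \<longrightarrow>
            kahan_map f P = switch_map C D Binf (switch_map C D B0 P))
       \<and> closure {P. kahan_defined f P \<and> switch_defined C D B0 P
              \<and> switch_defined C D Binf (switch_map C D B0 P)} = UNIV"
proof -
  interpret kp \<alpha> \<beta> a1 a2 a3 a4 a5 .
  have d1: "deriv (\<lambda>t. H x t) y = kF1 x y" for x y
  proof -
    have "((\<lambda>t. H x t) has_field_derivative (a2*x + a3*y + a5)) (at y)"
      unfolding H_def by (auto intro!: derivative_eq_intros simp: field_simps)
    then show ?thesis unfolding kF1_def by (rule DERIV_imp_deriv)
  qed
  have d2: "deriv (\<lambda>t. H t y) x = a1*x + a2*y + a4" for x y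
  proof -
    have "((\<lambda>t. H t y) has_field_derivative (a1*x + a2*y + a4)) (at x)"
      unfolding H_def by (auto intro!: derivative_eq_intros simp: field_simps)
    then show ?thesis by (rule DERIV_imp_deriv)
  qed
  have fe: "f (x,y) = (kl x y * kF1 x y, kl x y * kF2 x y)" for x y
    unfolding f_def d1 d2 kF2_def kl_def l_def by (simp add: algebra_simps)
  have Ce: "C (x,y) = kC2 x y / 2" for x y
    unfolding C_def H_def l_def \<gamma>2_def kC2_def kH2_def kl_def kg2_def divide_inverse
    by (simp; algebra)
  have De: "D (x,y) = kD x y" for x y
    unfolding D_def kD_def l_def kl_def \<gamma>1_def kg1_def by simp
  have hh: "khh \<noteq> 0" using rho_denom unfolding khh_def .
  have rr: "\<rho> * khh = knm" using rho_denom unfolding \<rho>_def khh_def knm_def by simp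
  show ?thesis
    by (rule main[OF fe Ce De hh rr not_both_zero B0_def[THEN meta_eq_to_obj_eq] Binf_def[THEN meta_eq_to_obj_eq]])
qed

end
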